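(* Let $0\le\lambda<\gamma\le\delta$. Let $\mathfrak{f}\in\mathcal{R}_H^0(\gamma,\delta,\lambda)$ and let $\varphi\in\mathcal{A}$ be such that $\mathrm{Re}\left(\frac{\varphi(z)}{z}\right)>\frac12$ for all $z\in\mathcal{U}$. Then $\mathfrak{f}\,\widetilde{\ast}\,\varphi\in\mathcal{R}_H^0(\gamma,\delta,\lambda)$.
   Context: Let $\mathcal{U}=\{z\in\mathbb{C}:|z|<1\}$ and let $\mathcal{A}$ be the class of analytic functions $F$ in $\mathcal{U}$ with $F(0)=0$, $F'(0)=1$. $\mathcal{H}^0$ denotes the class of complex-valued harmonic functions $\mathfrak{f}=\mathfrak{s}+\overline{\mathfrak{t}}$ on $\mathcal{U}$, where $\mathfrak{s}(z)=z+\sum_{m\ge2}a_mz^m$ and $\mathfrak{t}(z)=\sum_{m\ge2}b_mz^m$ are analytic in $\mathcal{U}$. For real $0\le\lambda<\gamma\le\delta$, $\mathcal{R}_H^0(\gamma,\delta,\lambda)$ is the class of $\mathfrak{f}=\mathfrak{s}+\overline{\mathfrak{t}}\in\mathcal{H}^0$ such that for all $z\in\mathcal{U}$, $\mathrm{Re}\left[\gamma\mathfrak{s}'(z)+\delta z\mathfrak{s}''(z)+\frac{\delta-\gamma}{2}z^2\mathfrak{s}'''(z)-\lambda\right]>\left|\gamma\mathfrak{t}'(z)+\delta z\mathfrak{t}''(z)+\frac{\delta-\gamma}{2}z^2\mathfrak{t}'''(z)\right|$. For analytic $g(z)=\sum c_mz^m$, $h(z)=\sum d_mz^m$, $(g\ast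 h)(z)=\sum c_md_mz^m$. For harmonic $\mathfrak{f}=\mathfrak{s}+\overline{\mathfrak{t}}$ and analytic $\varphi$, $\mathfrak{f}\,\widetilde{\ast}\,\varphi=\mathfrak{s}\ast\varphi+\overline{\mathfrak{t}\ast\varphi}$. Here $\varphi(z)/z$ at $z=0$ means its limiting value $1$. *)

theory Defs
  imports "HOL-Analysis.Analysis"
begin

definition unit_disc :: "complex set" where
  "unit_disc = ball 0 1"

definition taylor_coeff :: "(complex \<Rightarrow> complex) \<Rightarrow> nat \<Rightarrow> complex" where
  "taylor_coeff g n = (deriv ^^ n) g 0 / of_nat (fact n)"

definition hadamard :: "(complex \<Rightarrow> complex) \<Rightarrow> (complex \<Rightarrow> complex) \<Rightarrow> complex \<Rightarrow> complex" where
  "hadamard g h z = (\<Sum>m. taylor_coeff g m * taylor_coeff h m * z ^ m)"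

definition class_A :: "(complex \<Rightarrow> complex) set" where
  "class_A = {F. F holomorphic_on unit_disc \<and> F 0 = 0 \<and> deriv F 0 = 1}"

(* H^0: harmonic f = s + conj t, represented by the pair (s,t),
   s(z) = z + sum_{m>=2} a_m z^m,  t(z) = sum_{m>=2} b_m z^m *)
definition class_H0 :: "((complex \<Rightarrow> complex) \<times> (complex \<Rightarrow> complex)) set" where
  "class_H0 = {(s, t). s holomorphic_on unit_disc \<and> s 0 = 0 \<and> deriv s 0 = 1 \<and>
                       t holomorphic_on unit_disc \<and> t 0 = 0 \<and> deriv t 0 = 0}"

definition Lop :: "real \<Rightarrow> real \<Rightarrow> (complex \<Rightarrow> complex) \<Rightarrow> complex \<Rightarrow> complex" where
  "Lop \<gamma> \<delta> g z = of_real \<gamma> * deriv g z + of_real \<delta> * z * (deriv ^^ 2) g z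
       + of_real ((\<delta> - \<gamma>) / 2) * z ^ 2 * (deriv ^^ 3) g z"

definition class_RH0 :: "real \<Rightarrow> real \<Rightarrow> real \<Rightarrow> ((complex \<Rightarrow> complex) \<times> (complex \<Rightarrow> complex)) set" where
  "class_RH0 \<gamma> \<delta> lam = {(s, t). (s, t) \<in> class_H0 \<and>
      (\<forall>z\<in>unit_disc. Re (Lop \<gamma> \<delta> s z - of_real lam) > cmod (Lop \<gamma> \<delta> t z))}"

(* phi(z)/z with its limiting value 1 at z = 0 (for phi in class A) *)
definition quot_z :: "(complex \<Rightarrow> complex) \<Rightarrow> complex \<Rightarrow> complex" where
  "quot_z \<phi> z = (if z = 0 then 1 else \<phi> z / z)"

end

theory Submission
  imports Defs "HOL-Complex_Analysis.Complex_Analysis"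
begin
lemma cis_int_integral:
  fixes k :: int
  shows "((\<lambda>\<theta>. cis (of_int k * \<theta>)) has_integral (if k = 0 then of_real (2*pi) else 0)) {0..2*pi}"
proof (cases "k = 0")
  case True
  then show ?thesis using has_integral_const_real[of "1::complex" 0 "2*pi"]
    by (simp add: scaleR_conv_of_real)
next
  case False
  define F where "F = (\<lambda>x::complex. exp (\<i> * of_int k * x) / (\<i> * of_int k))"
  have d: "((\<lambda>x. F (of_real x)) has_vector_derivative cis (of_int k * \<theta>)) (at \<theta> within {0..2*pi})" for \<theta>
  proof -
    have "(F has_field_derivative exp (\<i> * of_int k * of_real \<theta>)) (at (of_real \<theta>))"
      unfolding F_def using False
      by (auto intro!: derivative_eq_intros simp: field_simps)
    then have "((\<lambda>x. F (of_real x)) has_vector_derivative exp (\<i> * of_int k * of_real \<theta>)) (at \<theta> within {0..2*pi})"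
      by (rule has_vector_derivative_real_field)
    moreover have "exp (\<i> * of_int k * of_real \<theta>) = cis (of_int k * \<theta>)"
      by (simp add: cis_conv_exp mult_ac)
    ultimately show ?thesis by simp
  qed
  have "((\<lambda>\<theta>. cis (of_int k * \<theta>)) has_integral (F (of_real (2*pi)) - F (of_real 0))) {0..2*pi}"
    by (rule fundamental_theorem_of_calculus) (use d in auto)
  moreover have "F (of_real (2*pi)) - F (of_real 0) = 0"
  proof -
    have "exp (\<i> * of_int k * of_real (2*pi)) = 1"
      using exp_integer_2pi[of "of_int k"] by (simp add: mult_ac)
    then show ?thesis unfolding F_def by simp
  qed
  ultimately show ?thesis using False by simp
qed

lemma int_series:
  fixes c :: "nat \<Rightarrow> complex" and e w :: "real \<Rightarrow> complex" and J :: "nat \<Rightarrow> complex"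
  assumes sc: "summable (\<lambda>n. norm (c n) * r ^ n)"
    and cw: "continuous_on {a..b} w" and ce: "continuous_on {a..b} e"
    and er: "\<And>\<theta>. \<theta> \<in> {a..b} \<Longrightarrow> norm (e \<theta>) \<le> r"
    and J: "\<And>n. ((\<lambda>\<theta>. e \<theta> ^ n * w \<theta>) has_integral J n) {a..b}"
  shows "((\<lambda>\<theta>. (\<Sum>n. c n * e \<theta> ^ n) * w \<theta>) has_integral (\<Sum>n. c n * J n)) {a..b}"
proof -
  have "compact (w ` {a..b})" by (rule compact_continuous_image[OF cw]) simp
  then obtain B where B: "B > 0" "\<And>\<theta>. \<theta> \<in> {a..b} \<Longrightarrow> norm (w \<theta>) \<le> B"
    using compact_imp_bounded bounded_pos by (metis imageI)
  define f where "f = (\<lambda>i \<theta>. c i * e \<theta> ^ i * w \<theta>)"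
  have fb: "norm (f i \<theta>) \<le> norm (c i) * r ^ i * B" if "\<theta> \<in> {a..b}" for i \<theta>
  proof -
    have "norm (f i \<theta>) = norm (c i) * norm (e \<theta>) ^ i * norm (w \<theta>)"
      by (simp add: f_def norm_mult norm_power)
    also have "\<dots> \<le> norm (c i) * r ^ i * B"
      using er[OF that] B(2)[OF that] order_trans[OF norm_ge_zero er[OF that]]
      by (intro mult_mono mult_left_mono power_mono) auto
    finally show ?thesis .
  qed
  have u: "uniform_limit {a..b} (\<lambda>N \<theta>. \<Sum>i<N. f i \<theta>) (\<lambda>\<theta>. \<Sum>i. f i \<theta>) sequentially"
    by (rule Weierstrass_m_test[OF fb]) (use sc in \<open>auto intro: summable_mult2\<close>)
  have cont: "continuous_on {a..b} (\<lambda>\<theta>. \<Sum>i<N. f i \<theta>)" for N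
    unfolding f_def by (intro continuous_intros cw ce)
  obtain I J' where I: "\<And>N. ((\<lambda>\<theta>. \<Sum>i<N. f i \<theta>) has_integral I N) {a..b}"
    and J': "((\<lambda>\<theta>. \<Sum>i. f i \<theta>) has_integral J') {a..b}" and lim: "I \<longlonglongrightarrow> J'"
    by (rule uniform_limit_integral[OF u cont]) auto
  have fi: "(f i has_integral c i * J i) {a..b}" for i
    using has_integral_mult_right[OF J[of i], of "c i"] by (simp add: f_def mult.assoc)
  have "I N = (\<Sum>i<N. c i * J i)" for N
    using has_integral_unique[OF I[of N] has_integral_sum[OF _ fi]] by simp
  hence "I = (\<lambda>N. \<Sum>i<N. c i * J i)" by (intro ext)
  with lim have "(\<lambda>i. c i * J i) sums J'" by (simp add: sums_def)
  hence sJ: "(\<Sum>n. c n * J n) = J'" by (simp add: sums_iff)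
  have eq: "(\<Sum>i. f i \<theta>) = (\<Sum>n. c n * e \<theta> ^ n) * w \<theta>" if "\<theta> \<in> {a..b}" for \<theta>
  proof -
    have "summable (\<lambda>n. c n * e \<theta> ^ n)"
    proof (rule summable_comparison_test[OF _ sc])
      show "\<exists>N. \<forall>n\<ge>N. norm (c n * e \<theta> ^ n) \<le> norm (c n) * r ^ n"
        using er[OF that] by (auto simp: norm_mult norm_power intro!: mult_left_mono power_mono)
    qed
    then show ?thesis unfolding f_def by (simp add: suminf_mult2)
  qed
  have "((\<lambda>\<theta>. (\<Sum>n. c n * e \<theta> ^ n) * w \<theta>) has_integral J') {a..b}"
    using has_integral_cong[of "{a..b}" "\<lambda>\<theta>. \<Sum>i. f i \<theta>" "\<lambda>\<theta>. (\<Sum>n. c n * e \<theta> ^ n) * w \<theta>" J'] J' eq by blast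
  thus ?thesis using sJ by simp
qed

lemma int_mono1:
  fixes a b :: complex
  shows "((\<lambda>\<theta>. (a * cis \<theta>) ^ n * (b * cis (-\<theta>)) ^ m) has_integral
           (if n = m then of_real (2*pi) * (a ^ n * b ^ m) else 0)) {0..2*pi}"
proof -
  have eq: "(a * cis \<theta>) ^ n * (b * cis (-\<theta>)) ^ m = (a ^ n * b ^ m) * cis (of_int (int n - int m) * \<theta>)" for \<theta>
  proof -
    have "cis \<theta> ^ n * cis (-\<theta>) ^ m = cis (of_int (int n - int m) * \<theta>)"
      by (simp add: Complex.DeMoivre cis_mult algebra_simps)
    thus ?thesis by (simp add: power_mult_distrib mult_ac)
  qed
  have "((\<lambda>\<theta>. (a ^ n * b ^ m) * cis (of_int (int n - int m) * \<theta>)) has_integral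
           (a ^ n * b ^ m) * (if int n - int m = 0 then of_real (2*pi) else 0)) {0..2*pi}"
    by (rule has_integral_mult_right[OF cis_int_integral])
  then have "((\<lambda>\<theta>. (a * cis \<theta>) ^ n * (b * cis (-\<theta>)) ^ m) has_integral
           (a ^ n * b ^ m) * (if int n - int m = 0 then of_real (2*pi) else 0)) {0..2*pi}"
    unfolding eq .
  then show ?thesis by (cases "n = m") (simp_all add: mult.commute)
qed

lemma int_mono2:
  fixes a b :: complex
  shows "((\<lambda>\<theta>. (a * cis (-\<theta>)) ^ n * (b * cis (-\<theta>)) ^ m) has_integral
           (if n = 0 \<and> m = 0 then of_real (2*pi) else 0)) {0..2*pi}"
proof -
  have eq: "(a * cis (-\<theta>)) ^ n * (b * cis (-\<theta>)) ^ m = (a ^ n * b ^ m) * cis (of_int (- int n - int m) * \<theta>)" for \<theta>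
  proof -
    have "cis (-\<theta>) ^ n * cis (-\<theta>) ^ m = cis (of_int (- int n - int m) * \<theta>)"
      apply (simp add: Complex.DeMoivre cis_mult)
      apply (rule arg_cong[where f=cis])
      by (simp add: algebra_simps)
    thus ?thesis by (simp add: power_mult_distrib mult_ac)
  qed
  have "((\<lambda>\<theta>. (a ^ n * b ^ m) * cis (of_int (- int n - int m) * \<theta>)) has_integral
           (a ^ n * b ^ m) * (if - int n - int m = 0 then of_real (2*pi) else 0)) {0..2*pi}"
    by (rule has_integral_mult_right[OF cis_int_integral])
  then have "((\<lambda>\<theta>. (a * cis (-\<theta>)) ^ n * (b * cis (-\<theta>)) ^ m) has_integral
           (a ^ n * b ^ m) * (if - int n - int m = 0 then of_real (2*pi) else 0)) {0..2*pi}"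
    unfolding eq .
  then show ?thesis by (cases "n = 0 \<and> m = 0") (auto simp: mult.commute)
qed

lemma conv_radius_hadamard:
  fixes F G :: "complex fps"
  assumes "fps_conv_radius F \<ge> 1" "fps_conv_radius G \<ge> 1"
  shows "fps_conv_radius (Abs_fps (\<lambda>n. fps_nth F n * fps_nth G n)) \<ge> 1"
  unfolding fps_conv_radius_def fps_nth_Abs_fps
proof (rule conv_radius_geI_ex')
  fix r :: real assume r: "0 < r" "ereal r < 1"
  define s where "s = sqrt r"
  have s: "0 < s" "s < 1" "s * s = r" using r by (auto simp: s_def)
  have s1: "ereal s < 1" using s by simp
  have nF: "summable (\<lambda>n. norm (fps_nth F n * of_real s ^ n))"
    by (rule norm_summable_fps) (use s less_le_trans[OF s1 assms(1)] less_le_trans[OF s1 assms(2)] in auto)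
  have nG: "summable (\<lambda>n. norm (fps_nth G n * of_real s ^ n))"
    by (rule norm_summable_fps) (use s less_le_trans[OF s1 assms(1)] less_le_trans[OF s1 assms(2)] in auto)
  have "(\<lambda>n. norm (fps_nth F n * of_real s ^ n)) \<longlonglongrightarrow> 0" by (rule summable_LIMSEQ_zero[OF nF])
  hence "Bseq (\<lambda>n. norm (fps_nth F n * of_real s ^ n))" by (rule convergent_imp_Bseq[OF convergentI])
  then obtain K where K: "K > 0" "\<And>n. norm (norm (fps_nth F n * of_real s ^ n)) \<le> K"
    by (auto elim!: BseqE)
  have "summable (\<lambda>n. norm (fps_nth F n * fps_nth G n * of_real r ^ n))"
  proof (rule summable_comparison_test[OF _ summable_mult[OF nG, of K]])
    show "\<exists>N. \<forall>n\<ge>N. norm (norm (fps_nth F n * fps_nth G n * complex_of_real r ^ n)) \<le> K * norm (fps_nth G n * of_real s ^ n)"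
    proof (intro exI allI impI)
      fix n
      have "norm (norm (fps_nth F n * fps_nth G n * complex_of_real r ^ n)) =
            norm (fps_nth F n * of_real s ^ n) * norm (fps_nth G n * of_real s ^ n)"
        by (simp add: norm_mult norm_power s(3)[symmetric] power_mult_distrib)
      also have "\<dots> \<le> K * norm (fps_nth G n * of_real s ^ n)"
        using K(2)[of n] by (intro mult_right_mono) auto
      finally show "norm (norm (fps_nth F n * fps_nth G n * complex_of_real r ^ n)) \<le> K * norm (fps_nth G n * of_real s ^ n)" .
    qed
  qed
  thus "summable (\<lambda>n. fps_nth F n * fps_nth G n * of_real r ^ n)" by (rule summable_norm_cancel)
qed

lemma keyid:
  fixes Pf Qf :: "complex fps" and \<rho> :: real and u :: complex
  assumes rP: "fps_conv_radius Pf \<ge> 1" and rQ: "fps_conv_radius Qf \<ge> 1" and q0: "fps_nth Qf 0 = 1"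
    and \<rho>: "0 < \<rho>" "\<rho> < 1" and u: "norm u < 1"
  shows "((\<lambda>\<theta>. eval_fps Pf (u * cis (-\<theta>)) *
             (eval_fps Qf (of_real \<rho> * cis \<theta>) + cnj (eval_fps Qf (of_real \<rho> * cis \<theta>)) - 1))
          has_integral (of_real (2*pi) * eval_fps (Abs_fps (\<lambda>n. fps_nth Pf n * fps_nth Qf n)) (of_real \<rho> * u)))
          {0..2*pi}"
proof -
  have lt: "ereal x < 1 \<Longrightarrow> ereal x < fps_conv_radius F" if "fps_conv_radius F \<ge> 1" for x F
    using that less_le_trans by blast
  have sP: "summable (\<lambda>n. norm (fps_nth Pf n) * norm u ^ n)"
    using norm_summable_fps[of u Pf] lt[OF rP, of "norm u"] u by (simp add: norm_mult norm_power)
  have sQ: "summable (\<lambda>n. norm (fps_nth Qf n) * \<rho> ^ n)"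
    using norm_summable_fps[of "of_real \<rho>" Qf] lt[OF rQ, of \<rho>] \<rho> by (simp add: norm_mult norm_power)
  have sQc: "summable (\<lambda>n. norm (cnj (fps_nth Qf n)) * \<rho> ^ n)" using sQ by simp
  have inQ: "of_real \<rho> * cis \<theta> \<in> eball 0 (fps_conv_radius Qf)" for \<theta>
    using lt[OF rQ, of \<rho>] \<rho> by (simp add: norm_mult)
  have inP: "u * cis (-\<theta>) \<in> eball 0 (fps_conv_radius Pf)" for \<theta>
    using lt[OF rP, of "norm u"] u by (simp add: norm_mult)
  have ru: "\<rho> * norm u < 1"
  proof -
    have "\<rho> * norm u \<le> norm u" using \<rho> by (intro mult_left_le_one_le) auto
    thus ?thesis using u by simp
  qed
  have rQ': "ereal \<bar>\<rho>\<bar> < fps_conv_radius Qf" using lt[OF rQ, of \<rho>] \<rho> by simp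
  have cQ: "continuous_on {0..2*pi} (\<lambda>\<theta>. eval_fps Qf (of_real \<rho> * cis \<theta>))"
    by (intro continuous_intros) (use inQ in auto)
  define Qc where "Qc = (\<lambda>\<theta>. eval_fps Qf (of_real \<rho> * cis \<theta>))"
  have JA: "((\<lambda>\<theta>. (u * cis (-\<theta>)) ^ m * Qc \<theta>) has_integral
              of_real (2*pi) * (fps_nth Qf m * of_real \<rho> ^ m * u ^ m)) {0..2*pi}" for m
  proof -
    have "((\<lambda>\<theta>. (\<Sum>n. fps_nth Qf n * (of_real \<rho> * cis \<theta>) ^ n) * (u * cis (-\<theta>)) ^ m) has_integral
           (\<Sum>n. fps_nth Qf n * (if n = m then of_real (2*pi) * (of_real \<rho> ^ n * u ^ m) else 0))) {0..2*pi}"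
      by (rule int_series[OF sQ _ _ _ int_mono1]) (auto intro!: continuous_intros simp: norm_mult \<rho>(1) less_imp_le)
    moreover have "(\<Sum>n. fps_nth Qf n * (if n = m then of_real (2*pi) * (of_real \<rho> ^ n * u ^ m) else 0))
        = of_real (2*pi) * (fps_nth Qf m * of_real \<rho> ^ m * u ^ m)"
    proof -
      have "(\<lambda>n. fps_nth Qf n * (if n = m then of_real (2*pi) * (of_real \<rho> ^ n * u ^ m) else 0))
           = (\<lambda>n. if n = m then of_real (2*pi) * (fps_nth Qf m * of_real \<rho> ^ m * u ^ m) else 0)"
        by (auto simp: mult_ac)
      thus ?thesis using sums_single[of m "\<lambda>_. of_real (2*pi) * (fps_nth Qf m * of_real \<rho> ^ m * u ^ m)"]
        by (simp add: sums_iff)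
    qed
    ultimately show ?thesis unfolding Qc_def eval_fps_def by (simp add: mult.commute)
  qed
  have JB: "((\<lambda>\<theta>. (u * cis (-\<theta>)) ^ m * cnj (Qc \<theta>)) has_integral
              (if m = 0 then of_real (2*pi) else 0)) {0..2*pi}" for m
  proof -
    have "((\<lambda>\<theta>. (\<Sum>n. cnj (fps_nth Qf n) * (of_real \<rho> * cis (-\<theta>)) ^ n) * (u * cis (-\<theta>)) ^ m) has_integral
           (\<Sum>n. cnj (fps_nth Qf n) * (if n = 0 \<and> m = 0 then of_real (2*pi) else 0))) {0..2*pi}"
      by (rule int_series[OF sQc _ _ _ int_mono2]) (auto intro!: continuous_intros simp: norm_mult \<rho>(1) less_imp_le)
    moreover have "(\<Sum>n. cnj (fps_nth Qf n) * (if n = 0 \<and> m = 0 then of_real (2*pi) else 0))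
        = (if m = 0 then of_real (2*pi) else 0)"
    proof -
      have "(\<lambda>n. cnj (fps_nth Qf n) * (if n = 0 \<and> m = 0 then of_real (2*pi) else 0))
           = (\<lambda>n. if n = 0 then (if m = 0 then of_real (2*pi) else 0) else 0)"
        using q0 by auto
      thus ?thesis using sums_single[of 0 "\<lambda>_. (if m = 0 then of_real (2*pi) else 0) :: complex"]
        by (simp add: sums_iff)
    qed
    moreover have "cnj (Qc \<theta>) = (\<Sum>n. cnj (fps_nth Qf n) * (of_real \<rho> * cis (-\<theta>)) ^ n)" for \<theta>
    proof -
      have "summable (\<lambda>n. fps_nth Qf n * (of_real \<rho> * cis \<theta>) ^ n)"
        by (rule summable_fps) (use lt[OF rQ, of \<rho>] \<rho> in \<open>simp add: norm_mult\<close>)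
      hence "(\<lambda>n. fps_nth Qf n * (of_real \<rho> * cis \<theta>) ^ n) sums Qc \<theta>"
        unfolding Qc_def eval_fps_def by (rule summable_sums)
      hence "(\<lambda>n. cnj (fps_nth Qf n * (of_real \<rho> * cis \<theta>) ^ n)) sums cnj (Qc \<theta>)"
        by (subst sums_cnj)
      thus ?thesis by (simp add: sums_iff cis_cnj)
    qed
    ultimately show ?thesis by (simp add: mult.commute)
  qed
  have JC: "((\<lambda>\<theta>. (u * cis (-\<theta>)) ^ m * 1) has_integral
              (if m = 0 then of_real (2*pi) else 0)) {0..2*pi}" for m
    using int_mono2[of 1 0 u m] by simp
  have Jall: "((\<lambda>\<theta>. (u * cis (-\<theta>)) ^ m * (Qc \<theta> + cnj (Qc \<theta>) - 1)) has_integral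
              of_real (2*pi) * (fps_nth Qf m * of_real \<rho> ^ m * u ^ m)) {0..2*pi}" for m
    using has_integral_diff[OF has_integral_add[OF JA[of m] JB[of m]] JC[of m]]
    by (simp add: ring_distribs)
  have main: "((\<lambda>\<theta>. (\<Sum>n. fps_nth Pf n * (u * cis (-\<theta>)) ^ n) * (Qc \<theta> + cnj (Qc \<theta>) - 1)) has_integral
         (\<Sum>n. fps_nth Pf n * (of_real (2*pi) * (fps_nth Qf n * of_real \<rho> ^ n * u ^ n)))) {0..2*pi}"
    by (rule int_series[OF sP _ _ _ Jall]) (auto intro!: continuous_intros simp: norm_mult Qc_def cQ rQ')
  have "(\<Sum>n. fps_nth Pf n * (of_real (2*pi) * (fps_nth Qf n * of_real \<rho> ^ n * u ^ n)))
      = (\<Sum>n. of_real (2*pi) * (fps_nth Pf n * fps_nth Qf n * (of_real \<rho> * u) ^ n))"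
    by (simp add: power_mult_distrib mult_ac)
  also have "\<dots> = of_real (2*pi) * eval_fps (Abs_fps (\<lambda>n. fps_nth Pf n * fps_nth Qf n)) (of_real \<rho> * u)"
  proof -
    have "summable (\<lambda>n. fps_nth (Abs_fps (\<lambda>n. fps_nth Pf n * fps_nth Qf n)) n * (of_real \<rho> * u) ^ n)"
      by (rule summable_fps) (use lt[OF conv_radius_hadamard[OF rP rQ], of "\<rho> * norm u"] \<rho> u
         ru in \<open>auto simp: norm_mult abs_of_pos\<close>)
    thus ?thesis unfolding eval_fps_def by (simp add: suminf_mult)
  qed
  finally show ?thesis using main unfolding Qc_def eval_fps_def by simp
qed

lemma key:
  fixes Pf Qf :: "complex fps" and lam :: real and z :: complex
  assumes rP: "fps_conv_radius Pf \<ge> 1" and rQ: "fps_conv_radius Qf \<ge> 1" and q0: "fps_nth Qf 0 = 1"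
    and hQ: "\<And>w. norm w < 1 \<Longrightarrow> Re (eval_fps Qf w) > 1/2"
    and hP: "\<And>w. norm w < 1 \<Longrightarrow> Re (eval_fps Pf w) > lam"
    and z: "norm z < 1"
  shows "Re (eval_fps (Abs_fps (\<lambda>n. fps_nth Pf n * fps_nth Qf n)) z) > lam"
proof -
  define \<rho> where "\<rho> = (1 + norm z) / 2"
  have \<rho>: "0 < \<rho>" "\<rho> < 1" "norm z < \<rho>" unfolding \<rho>_def using z norm_ge_zero[of z] by (auto intro!: add_pos_nonneg)
  define u where "u = z / of_real \<rho>"
  have u: "norm u < 1" using \<rho> by (simp add: u_def norm_divide divide_less_eq)
  have \<rho>u: "of_real \<rho> * u = z" using \<rho> by (simp add: u_def)
  define H where "H = eval_fps (Abs_fps (\<lambda>n. fps_nth Pf n * fps_nth Qf n)) z"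
  define g where "g = (\<lambda>\<theta>. 2 * Re (eval_fps Qf (of_real \<rho> * cis \<theta>)) - 1)"
  have geq: "eval_fps Qf (of_real \<rho> * cis \<theta>) + cnj (eval_fps Qf (of_real \<rho> * cis \<theta>)) - 1 = of_real (g \<theta>)" for \<theta>
    by (simp add: g_def complex_add_cnj)
  have gpos: "g \<theta> > 0" for \<theta>
    using hQ[of "of_real \<rho> * cis \<theta>"] \<rho> by (simp add: g_def norm_mult)
  have I1: "((\<lambda>\<theta>. eval_fps Pf (u * cis (-\<theta>)) * of_real (g \<theta>)) has_integral (of_real (2*pi) * H)) {0..2*pi}"
    using keyid[OF rP rQ q0 \<rho>(1,2) u] unfolding geq \<rho>u H_def .
  have I1r: "((\<lambda>\<theta>. Re (eval_fps Pf (u * cis (-\<theta>))) * g \<theta>) has_integral (2*pi * Re H)) {0..2*pi}"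
    using has_integral_linear[OF I1 bounded_linear_Re] by (simp add: o_def)
  have r1: "fps_conv_radius (1 :: complex fps) \<ge> 1" by simp
  have one: "Abs_fps (\<lambda>n. fps_nth (1::complex fps) n * fps_nth Qf n) = 1"
    using q0 by (auto simp: fps_eq_iff)
  have I2: "((\<lambda>\<theta>. of_real (g \<theta>) :: complex) has_integral of_real (2*pi)) {0..2*pi}"
    using keyid[OF r1 rQ q0 \<rho>(1,2) u] unfolding geq one by simp
  have I2r: "(g has_integral (2*pi)) {0..2*pi}"
    using has_integral_linear[OF I2 bounded_linear_Re] by (simp add: o_def)
  define f where "f = (\<lambda>\<theta>. Re (eval_fps Pf (u * cis (-\<theta>))))"
  have inP: "u * cis (-\<theta>) \<in> eball 0 (fps_conv_radius Pf)" for \<theta>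
    using less_le_trans[OF _ rP, of "norm u"] u by (simp add: norm_mult)
  have cf: "continuous_on {0..2*pi} f"
    unfolding f_def by (intro continuous_intros) (use inP in auto)
  obtain \<theta>0 where \<theta>0: "\<theta>0 \<in> {0..2*pi}" "\<And>\<theta>. \<theta> \<in> {0..2*pi} \<Longrightarrow> f \<theta>0 \<le> f \<theta>"
    using continuous_attains_inf[OF compact_Icc _ cf] by auto
  have m: "f \<theta>0 > lam" using hP[of "u * cis (-\<theta>0)"] u by (simp add: f_def norm_mult)
  have "f \<theta>0 * (2*pi) \<le> 2*pi * Re H"
  proof (rule has_integral_le[OF has_integral_mult_right[OF I2r, of "f \<theta>0"] I1r])
    fix \<theta> assume "\<theta> \<in> {0..2*pi}"
    thus "f \<theta>0 * g \<theta> \<le> Re (eval_fps Pf (u * cis (-\<theta>))) * g \<theta>"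
      using \<theta>0(2) gpos[of \<theta>] by (intro mult_right_mono) (auto simp: f_def less_imp_le)
  qed
  hence "f \<theta>0 \<le> Re H" by (simp add: mult.commute)
  with m show ?thesis unfolding H_def by simp
qed

definition Lf :: "real \<Rightarrow> real \<Rightarrow> complex fps \<Rightarrow> complex fps" where
  "Lf \<gamma> \<delta> F = fps_const (of_real \<gamma>) * fps_deriv F
     + fps_const (of_real \<delta>) * fps_X * fps_deriv (fps_deriv F)
     + fps_const (of_real ((\<delta> - \<gamma>) / 2)) * fps_X ^ 2 * fps_deriv (fps_deriv (fps_deriv F))"

lemma rad_mult: "fps_conv_radius (f::complex fps) \<ge> r \<Longrightarrow> fps_conv_radius g \<ge> r \<Longrightarrow> fps_conv_radius (f * g) \<ge> r"
  using fps_conv_radius_mult[of f g] by (meson min.bounded_iff order_trans)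

lemma rad_add: "fps_conv_radius (f::complex fps) \<ge> r \<Longrightarrow> fps_conv_radius g \<ge> r \<Longrightarrow> fps_conv_radius (f + g) \<ge> r"
  using fps_conv_radius_add[of f g] by (meson min.bounded_iff order_trans)

lemma rad_deriv: "fps_conv_radius (f::complex fps) \<ge> r \<Longrightarrow> fps_conv_radius (fps_deriv f) \<ge> r"
  using fps_conv_radius_deriv[of f] by (meson order_trans)

lemma rad_Lf: "fps_conv_radius F \<ge> r \<Longrightarrow> fps_conv_radius (Lf \<gamma> \<delta> F) \<ge> r"
  unfolding Lf_def
  by (intro rad_add rad_mult rad_deriv) auto

lemma higher_deriv_eval_fps:
  fixes F :: "complex fps"
  assumes "norm z < fps_conv_radius F"
  shows "(deriv ^^ k) (eval_fps F) z = eval_fps ((fps_deriv ^^ k) F) z"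
  using assms
proof (induction k arbitrary: z)
  case 0
  then show ?case by simp
next
  case (Suc k)
  have rk: "fps_conv_radius ((fps_deriv ^^ k) F) \<ge> fps_conv_radius F" for k
    by (induction k) (auto intro: order_trans[OF _ fps_conv_radius_deriv])
  have ev: "eventually (\<lambda>w. (deriv ^^ k) (eval_fps F) w = eval_fps ((fps_deriv ^^ k) F) w) (nhds z)"
  proof -
    have "eventually (\<lambda>w. w \<in> eball 0 (fps_conv_radius F)) (nhds z)"
      using Suc.prems by (intro eventually_nhds_in_open) auto
    thus ?thesis by eventually_elim (use Suc.IH in auto)
  qed
  have "(deriv ^^ Suc k) (eval_fps F) z = deriv ((deriv ^^ k) (eval_fps F)) z" by simp
  also have "\<dots> = deriv (eval_fps ((fps_deriv ^^ k) F)) z"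
    by (rule deriv_cong_ev[OF ev refl])
  also have "\<dots> = eval_fps (fps_deriv ((fps_deriv ^^ k) F)) z"
    by (rule DERIV_imp_deriv[OF has_field_derivative_eval_fps])
       (use Suc.prems rk[of k] in \<open>auto intro: less_le_trans\<close>)
  finally show ?case by simp
qed

lemma rad_inf_cX: "fps_conv_radius (fps_const (c::complex) * fps_X ^ k) = \<infinity>"
  using fps_conv_radius_mult[of "fps_const c" "fps_X ^ k"] by simp

lemma evalT:
  fixes G :: "complex fps"
  assumes "norm z < fps_conv_radius G"
  shows "eval_fps (fps_const c * fps_X ^ k * G) z = c * z ^ k * eval_fps G z"
proof -
  have "eval_fps (fps_const c * fps_X ^ k * G) z = eval_fps (fps_const c * fps_X ^ k) z * eval_fps G z"
    by (rule eval_fps_mult) (use assms rad_inf_cX in auto)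
  also have "eval_fps (fps_const c * fps_X ^ k) z = c * z ^ k"
    by (subst eval_fps_mult) auto
  finally show ?thesis .
qed

lemma radT:
  fixes G :: "complex fps"
  assumes "norm z < fps_conv_radius G"
  shows "norm z < fps_conv_radius (fps_const c * fps_X ^ k * G)"
  using fps_conv_radius_mult[of "fps_const c * fps_X ^ k" G] assms rad_inf_cX[of c k]
  by (auto intro: less_le_trans)

lemma rad_add_strict:
  fixes f g :: "complex fps"
  assumes "norm z < fps_conv_radius f" "norm z < fps_conv_radius g"
  shows "norm z < fps_conv_radius (f + g)"
proof -
  have "ereal (norm z) < min (fps_conv_radius f) (fps_conv_radius g)" using assms by simp
  thus ?thesis using fps_conv_radius_add[of f g] by (rule less_le_trans)
qed

lemma Lop_eval:
  fixes F :: "complex fps"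
  assumes "norm z < fps_conv_radius F"
  shows "Lop \<gamma> \<delta> (eval_fps F) z = eval_fps (Lf \<gamma> \<delta> F) z"
proof -
  have d1: "deriv (eval_fps F) z = eval_fps (fps_deriv F) z"
    using higher_deriv_eval_fps[OF assms, of 1] by simp
  have d2: "(deriv ^^ 2) (eval_fps F) z = eval_fps (fps_deriv (fps_deriv F)) z"
    using higher_deriv_eval_fps[OF assms, of 2] by (simp add: numeral_2_eq_2)
  have d3: "(deriv ^^ 3) (eval_fps F) z = eval_fps (fps_deriv (fps_deriv (fps_deriv F))) z"
    using higher_deriv_eval_fps[OF assms, of 3] by (simp add: numeral_3_eq_3)
  have r1: "norm z < fps_conv_radius (fps_deriv F)"
    using assms fps_conv_radius_deriv[of F] by (auto intro: less_le_trans)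
  have r2: "norm z < fps_conv_radius (fps_deriv (fps_deriv F))"
    using r1 fps_conv_radius_deriv[of "fps_deriv F"] by (auto intro: less_le_trans)
  have r3: "norm z < fps_conv_radius (fps_deriv (fps_deriv (fps_deriv F)))"
    using r2 fps_conv_radius_deriv[of "fps_deriv (fps_deriv F)"] by (auto intro: less_le_trans)
  define T1 where "T1 = fps_const (complex_of_real \<gamma>) * fps_X ^ 0 * fps_deriv F"
  define T2 where "T2 = fps_const (complex_of_real \<delta>) * fps_X ^ 1 * fps_deriv (fps_deriv F)"
  define T3 where "T3 = fps_const (complex_of_real ((\<delta> - \<gamma>) / 2)) * fps_X ^ 2 * fps_deriv (fps_deriv (fps_deriv F))"
  have LT: "Lf \<gamma> \<delta> F = T1 + T2 + T3" unfolding Lf_def T1_def T2_def T3_def by simp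
  have rT1: "norm z < fps_conv_radius T1" unfolding T1_def by (rule radT[OF r1])
  have rT2: "norm z < fps_conv_radius T2" unfolding T2_def by (rule radT[OF r2])
  have rT3: "norm z < fps_conv_radius T3" unfolding T3_def by (rule radT[OF r3])
  have "eval_fps (Lf \<gamma> \<delta> F) z = eval_fps T1 z + eval_fps T2 z + eval_fps T3 z"
    unfolding LT using rT1 rT2 rT3 rad_add_strict[OF rT1 rT2]
    by (simp add: eval_fps_add rad_add_strict)
  also have "\<dots> = Lop \<gamma> \<delta> (eval_fps F) z"
    unfolding T1_def T2_def T3_def evalT[OF r1] evalT[OF r2] evalT[OF r3] Lop_def d1 d2 d3
    by simp
  finally show ?thesis by simp
qed

definition had :: "complex fps \<Rightarrow> complex fps \<Rightarrow> complex fps" where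
  "had F G = Abs_fps (\<lambda>n. fps_nth F n * fps_nth G n)"

definition mu :: "real \<Rightarrow> real \<Rightarrow> nat \<Rightarrow> complex" where
  "mu \<gamma> \<delta> n = of_real \<gamma> * (of_nat n + 1) + of_real \<delta> * of_nat n * (of_nat n + 1)
     + of_real ((\<delta> - \<gamma>) / 2) * (of_nat n - 1) * of_nat n * (of_nat n + 1)"

lemma Lf_nth: "fps_nth (Lf \<gamma> \<delta> F) n = mu \<gamma> \<delta> n * fps_nth F (n + 1)"
proof -
  have "Lf \<gamma> \<delta> F = fps_const (of_real \<gamma>) * fps_deriv F
     + fps_const (of_real \<delta>) * (fps_X * fps_deriv (fps_deriv F))
     + fps_const (of_real ((\<delta> - \<gamma>) / 2)) * (fps_X ^ 2 * fps_deriv (fps_deriv (fps_deriv F)))"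
    unfolding Lf_def by (simp add: mult.assoc)
  hence e: "fps_nth (Lf \<gamma> \<delta> F) n = of_real \<gamma> * fps_nth (fps_deriv F) n
     + of_real \<delta> * fps_nth (fps_X * fps_deriv (fps_deriv F)) n
     + of_real ((\<delta> - \<gamma>) / 2) * fps_nth (fps_X ^ 2 * fps_deriv (fps_deriv (fps_deriv F))) n"
    by simp
  consider "n = 0" | "n = 1" | m where "n = Suc (Suc m)"
    by (metis One_nat_def not0_implies_Suc)
  then show ?thesis
  proof cases
    case 1
    then show ?thesis unfolding e by (simp add: mu_def fps_X_power_mult_nth)
  next
    case 2
    then show ?thesis unfolding e fps_X_power_mult_nth by (simp add: mu_def algebra_simps)
  next
    case 3
    then show ?thesis unfolding e fps_X_power_mult_nth
      by (simp add: mu_def of_nat_Suc) (simp add: distrib_right mult.assoc)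
  qed
qed

lemma Lf_had: "Lf \<gamma> \<delta> (had A D) = had (Lf \<gamma> \<delta> A) (fps_shift 1 D)"
  by (simp add: fps_eq_iff Lf_nth had_def mult_ac)

lemma Lop_cong:
  assumes "eventually (\<lambda>w. f w = g w) (nhds z)"
  shows "Lop \<gamma> \<delta> f z = Lop \<gamma> \<delta> g z"
proof -
  have "(deriv ^^ k) f z = (deriv ^^ k) g z" for k
    by (rule higher_deriv_cong_ev[OF assms refl])
  from this[of 1] this[of 2] this[of 3] show ?thesis unfolding Lop_def by simp
qed

lemma rad_exp: "g holomorphic_on ball 0 1 \<Longrightarrow> fps_conv_radius (fps_expansion g 0) \<ge> 1"
  using conv_radius_fps_expansion[of g 0 "ereal 1"] by (simp add: one_ereal_def)

lemma eval_exp: "g holomorphic_on ball 0 1 \<Longrightarrow> norm z < 1 \<Longrightarrow> eval_fps (fps_expansion g 0) z = g z"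
  using eval_fps_expansion'[of g 0 "ereal 1" z] by (simp add: one_ereal_def)

lemma tc_eq: "taylor_coeff g = fps_nth (fps_expansion g 0)"
  by (rule ext) (simp add: taylor_coeff_def fps_expansion_def)

lemma hadamard_eq: "hadamard g h = eval_fps (had (fps_expansion g 0) (fps_expansion h 0))"
  by (rule ext) (simp add: hadamard_def eval_fps_def had_def tc_eq)

lemma lt1: "fps_conv_radius (F::complex fps) \<ge> 1 \<Longrightarrow> norm z < 1 \<Longrightarrow> norm z < fps_conv_radius F"
  by (erule less_le_trans[rotated]) simp

lemma Lop_exp:
  assumes "g holomorphic_on ball 0 1" "norm z < 1"
  shows "Lop \<gamma> \<delta> g z = eval_fps (Lf \<gamma> \<delta> (fps_expansion g 0)) z"
proof -
  have "eventually (\<lambda>w. w \<in> ball 0 1) (nhds z)"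
    using assms(2) by (intro eventually_nhds_in_open) auto
  hence "eventually (\<lambda>w. g w = eval_fps (fps_expansion g 0) w) (nhds z)"
    by eventually_elim (use assms(1) eval_exp in auto)
  hence "Lop \<gamma> \<delta> g z = Lop \<gamma> \<delta> (eval_fps (fps_expansion g 0)) z" by (rule Lop_cong)
  also have "\<dots> = eval_fps (Lf \<gamma> \<delta> (fps_expansion g 0)) z"
    by (rule Lop_eval[OF lt1[OF rad_exp[OF assms(1)] assms(2)]])
  finally show ?thesis .
qed

lemma rad_had: "fps_conv_radius F \<ge> 1 \<Longrightarrow> fps_conv_radius G \<ge> 1 \<Longrightarrow> fps_conv_radius (had F G) \<ge> 1"
  unfolding had_def by (rule conv_radius_hadamard)

lemma Lop_had:
  assumes "fps_conv_radius A \<ge> 1" "fps_conv_radius D \<ge> 1" "norm z < 1"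
  shows "Lop \<gamma> \<delta> (eval_fps (had A D)) z = eval_fps (had (Lf \<gamma> \<delta> A) (fps_shift 1 D)) z"
  using Lop_eval[OF lt1[OF rad_had[OF assms(1,2)] assms(3)]] by (simp add: Lf_had)

lemma had_lin: "had (F + fps_const e * G) Q = had F Q + fps_const e * had G Q"
  by (simp add: fps_eq_iff had_def algebra_simps)

lemma H0_part:
  assumes g: "g holomorphic_on ball 0 1" and h: "h holomorphic_on ball 0 1"
  shows "hadamard g h holomorphic_on ball 0 1" "hadamard g h 0 = g 0 * h 0"
    "deriv (hadamard g h) 0 = deriv g 0 * deriv h 0"
proof -
  define H where "H = had (fps_expansion g 0) (fps_expansion h 0)"
  have rH: "fps_conv_radius H \<ge> 1" unfolding H_def by (intro rad_had rad_exp g h)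
  have he: "hadamard g h = eval_fps H" unfolding H_def by (rule hadamard_eq)
  show "hadamard g h holomorphic_on ball 0 1" unfolding he
    by (rule holomorphic_on_eval_fps) (use lt1[OF rH] in \<open>auto simp: dist_norm\<close>)
  show "hadamard g h 0 = g 0 * h 0" unfolding he
    by (simp add: eval_fps_at_0 H_def had_def fps_expansion_def)
  have "deriv (eval_fps H) 0 = eval_fps ((fps_deriv ^^ 1) H) 0"
    using higher_deriv_eval_fps[of 0 H 1] lt1[OF rH, of 0] by simp
  thus "deriv (hadamard g h) 0 = deriv g 0 * deriv h 0" unfolding he
    by (simp add: eval_fps_at_0 H_def had_def fps_expansion_def)
qed

theorem theorem17:
  fixes \<gamma> \<delta> lam :: real and s t \<phi> :: "complex \<Rightarrow> complex"
  assumes "0 \<le> lam" and "lam < \<gamma>" and "\<gamma> \<le> \<delta>"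
    and "(s, t) \<in> class_RH0 \<gamma> \<delta> lam"
    and "\<phi> \<in> class_A"
    and "\<forall>z\<in>unit_disc. Re (quot_z \<phi> z) > 1 / 2"
  shows "(hadamard s \<phi>, hadamard t \<phi>) \<in> class_RH0 \<gamma> \<delta> lam"
proof -
  from assms(4) have hs: "s holomorphic_on ball 0 1" "s 0 = 0" "deriv s 0 = 1"
    and ht: "t holomorphic_on ball 0 1" "t 0 = 0" "deriv t 0 = 0"
    and ineq: "\<And>w. norm w < 1 \<Longrightarrow> Re (Lop \<gamma> \<delta> s w - of_real lam) > cmod (Lop \<gamma> \<delta> t w)"
    by (auto simp: class_RH0_def class_H0_def unit_disc_def)
  from assms(5) have hp: "\<phi> holomorphic_on ball 0 1" "\<phi> 0 = 0" "deriv \<phi> 0 = 1"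
    by (auto simp: class_A_def unit_disc_def)
  have hq: "\<And>w. norm w < 1 \<Longrightarrow> Re (quot_z \<phi> w) > 1/2"
    using assms(6) by (auto simp: unit_disc_def)
  define A where "A = fps_expansion s 0"
  define B where "B = fps_expansion t 0"
  define D where "D = fps_expansion \<phi> 0"
  define Q where "Q = fps_shift 1 D"
  have rA: "fps_conv_radius A \<ge> 1" unfolding A_def by (rule rad_exp[OF hs(1)])
  have rB: "fps_conv_radius B \<ge> 1" unfolding B_def by (rule rad_exp[OF ht(1)])
  have rD: "fps_conv_radius D \<ge> 1" unfolding D_def by (rule rad_exp[OF hp(1)])
  have rQ: "fps_conv_radius Q \<ge> 1" unfolding Q_def using rD by simp
  have q0: "fps_nth Q 0 = 1" unfolding Q_def D_def using hp(3) by (simp add: fps_expansion_def)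
  have DXQ: "D = fps_X * Q"
    unfolding Q_def fps_eq_iff using hp(2) by (simp add: D_def fps_expansion_def)
  have evQ: "eval_fps Q w = quot_z \<phi> w" if w: "norm w < 1" for w
  proof (cases "w = 0")
    case True
    then show ?thesis using q0 by (simp add: eval_fps_at_0 quot_z_def)
  next
    case False
    have "\<phi> w = eval_fps D w" unfolding D_def using eval_exp[OF hp(1) w] by simp
    also have "\<dots> = w * eval_fps Q w" unfolding DXQ
      by (subst eval_fps_mult) (use lt1[OF rQ w] in auto)
    finally show ?thesis using False by (simp add: quot_z_def)
  qed
  have hQ: "\<And>w. norm w < 1 \<Longrightarrow> Re (eval_fps Q w) > 1/2" using evQ hq by simp
  have rLA: "fps_conv_radius (Lf \<gamma> \<delta> A) \<ge> 1" by (rule rad_Lf[OF rA])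
  have rLB: "fps_conv_radius (Lf \<gamma> \<delta> B) \<ge> 1" by (rule rad_Lf[OF rB])
  have hsA: "hadamard s \<phi> = eval_fps (had A D)" unfolding A_def D_def by (rule hadamard_eq)
  have htB: "hadamard t \<phi> = eval_fps (had B D)" unfolding B_def D_def by (rule hadamard_eq)
  have main: "Re (Lop \<gamma> \<delta> (hadamard s \<phi>) z - of_real lam) > cmod (Lop \<gamma> \<delta> (hadamard t \<phi>) z)"
    if z: "norm z < 1" for z
  proof -
    define X where "X = Lop \<gamma> \<delta> (hadamard s \<phi>) z"
    define Y where "Y = Lop \<gamma> \<delta> (hadamard t \<phi>) z"
    have X: "X = eval_fps (had (Lf \<gamma> \<delta> A) Q) z"
      unfolding X_def hsA Q_def by (rule Lop_had[OF rA rD z])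
    have Y: "Y = eval_fps (had (Lf \<gamma> \<delta> B) Q) z"
      unfolding Y_def htB Q_def by (rule Lop_had[OF rB rD z])
    have all: "Re (X + e * Y) > lam" if e: "norm e = 1" for e
    proof -
      define Pf where "Pf = Lf \<gamma> \<delta> A + fps_const e * Lf \<gamma> \<delta> B"
      have rP: "fps_conv_radius Pf \<ge> 1" unfolding Pf_def
        by (intro rad_add rad_mult rLA rLB) auto
      have evP: "eval_fps (G + fps_const e * F) w = eval_fps G w + e * eval_fps F w"
        if "norm w < 1" "fps_conv_radius F \<ge> 1" "fps_conv_radius G \<ge> 1" for w F G
      proof -
        have "norm w < fps_conv_radius (fps_const e * F)"
          using lt1[OF rad_mult[OF _ that(2)] that(1), of "fps_const e"] by simp
        thus ?thesis using lt1[OF that(3,1)] lt1[OF that(2,1)]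
          by (simp add: eval_fps_add eval_fps_mult)
      qed
      have hP: "Re (eval_fps Pf w) > lam" if w: "norm w < 1" for w
      proof -
        have "eval_fps Pf w = eval_fps (Lf \<gamma> \<delta> A) w + e * eval_fps (Lf \<gamma> \<delta> B) w"
          unfolding Pf_def by (rule evP[OF w rLB rLA])
        also have "\<dots> = Lop \<gamma> \<delta> s w + e * Lop \<gamma> \<delta> t w"
          using Lop_exp[OF hs(1) w] Lop_exp[OF ht(1) w] by (simp add: A_def B_def)
        finally have "eval_fps Pf w = Lop \<gamma> \<delta> s w + e * Lop \<gamma> \<delta> t w" .
        moreover have "- cmod (Lop \<gamma> \<delta> t w) \<le> Re (e * Lop \<gamma> \<delta> t w)"
          using abs_Re_le_cmod[of "e * Lop \<gamma> \<delta> t w"] e by (simp add: norm_mult)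
        ultimately show ?thesis using ineq[OF w] by simp
      qed
      have "Re (eval_fps (had Pf Q) z) > lam"
        using key[OF rP rQ q0 hQ hP z] unfolding had_def .
      moreover have "eval_fps (had Pf Q) z = X + e * Y"
        unfolding Pf_def had_lin X Y
        by (rule evP[OF z rad_had[OF rLB rQ] rad_had[OF rLA rQ]])
      ultimately show ?thesis by simp
    qed
    show ?thesis
    proof (cases "Y = 0")
      case True
      then show ?thesis using all[of 1] by (simp add: X_def Y_def)
    next
      case False
      define e where "e = - cnj Y / of_real (cmod Y)"
      have e1: "norm e = 1" using False by (simp add: e_def norm_divide)
      have eY: "e * Y = - of_real (cmod Y)"
      proof -
        have "e * Y = - (Y * cnj Y) / of_real (cmod Y)" by (simp add: e_def mult.commute)
        also have "Y * cnj Y = of_real (cmod Y) * of_real (cmod Y)"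
          by (simp add: complex_norm_square[symmetric] power2_eq_square)
        finally show ?thesis using False by simp
      qed
      show ?thesis using all[OF e1] unfolding eY by (simp add: X_def Y_def)
    qed
  qed
  have "(hadamard s \<phi>, hadamard t \<phi>) \<in> class_H0"
    using H0_part[OF hs(1) hp(1)] H0_part[OF ht(1) hp(1)] hs ht hp
    by (simp add: class_H0_def unit_disc_def)
  thus ?thesis using main by (auto simp: class_RH0_def unit_disc_def)
qed

end
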